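(* In the generic model, let $\sigma:=-\partial_0\circ\mathcal P\colon H_R\to\mathbb R$ (the coefficient of $x$ in $\mathcal P$, negated). Then for every $w\in H_R$, $$\sigma\big(B_+(w)\big)=\sum_{n\ge0}c_{n-1}\,\sigma^{\star n}(w),$$ where $\sigma^{\star0}=\varepsilon$ and the sum is finite since $\sigma^{\star n}$ vanishes on forests with fewer than $n$ nodes.
   Context: Generic model: $f\colon[0,\infty)\to\mathbb R$ continuous with $f(\zeta)-c/\zeta=O(\zeta^{-1-\epsilon})$ at infinity; Mellin transform $F(z)=\int_0^\infty f(\zeta)\zeta^{-z}d\zeta=\sum_{n\ge-1}c_nz^n$ near $0$. $H_R$: Connes–Kreimer Hopf algebra of rooted trees ($B_+$ grafts a forest onto a new root; $\Delta\circ B_+=B_+\otimes\mathbb 1+(\mathrm{id}\otimes B_+)\circ\Delta$; counit $\varepsilon$; antipode $S$). $\phi_s(w)=s^{-z|w|}\prod_vF(z|w_v|)$ multiplicative, $\phi_{R,s}=\phi_\mu^{\star-1}\star\phi_s$, and $\mathcal P(w)\in\mathbb R[x]$ with $\lim_{z\to0}\phi_{R,s}(w)=\mathcal P(w)(\ln\frac s\mu)$. $\partial_0=\mathrm{ev}_0\circ\frac d{dx}$; convolution of functionals $\alpha\star\beta=m\circ(\alpha\otimes\beta)\circ\Delta$. *)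

theory Defs
  imports "HOL-Analysis.Analysis" "HOL-Library.Multiset" "HOL-Library.Poly_Mapping"
          "HOL-Library.Landau_Symbols" "HOL-Computational_Algebra.Polynomial"
begin

text \<open>A forest is a multiset of trees (the empty forest is the
  unit 1 of H_R).\<close>

datatype tree = Node "tree multiset"

type_synonym forest = "tree multiset"

text \<open>H_R = free commutative real algebra on trees = real vector space with basis the forests.\<close>
type_synonym HR = "forest \<Rightarrow>\<^sub>0 real"

definition Bplus_forest :: "forest \<Rightarrow> forest" where
  "Bplus_forest g = {# Node g #}"

definition Bplus :: "HR \<Rightarrow> HR" where
  "Bplus w = (\<Sum>g\<in>Poly_Mapping.keys w. Poly_Mapping.single (Bplus_forest g) (Poly_Mapping.lookup w g))"

definition linext :: "(forest \<Rightarrow> real) \<Rightarrow> HR \<Rightarrow> real" where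
  "linext \<alpha> w = (\<Sum>g\<in>Poly_Mapping.keys w. Poly_Mapping.lookup w g * \<alpha> g)"

text \<open>Elements of H_R \<otimes> H_R arising from the coproduct are represented as multisets of
  pairs of forests (each pair w' \<otimes> w'' with coefficient 1, counted with multiplicity).\<close>
definition tmul :: "(forest \<times> forest) multiset \<Rightarrow> (forest \<times> forest) multiset \<Rightarrow> (forest \<times> forest) multiset" where
  "tmul A B = \<Sum>\<^sub># (image_mset (\<lambda>(a1, b1). image_mset (\<lambda>(a2, b2). (a1 + a2, b1 + b2)) B) A)"

definition tone :: "(forest \<times> forest) multiset" where
  "tone = {# ({#}, {#}) #}"

text \<open>Coproduct, determined by multiplicativity and
  Delta \<circ> B_+ = B_+ \<otimes> 1 + (id \<otimes> B_+) \<circ> Delta, with Delta(1) = 1 \<otimes> 1.\<close>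
primrec cop_tree :: "tree \<Rightarrow> (forest \<times> forest) multiset" where
  "cop_tree (Node ts) =
     {# ({# Node ts #}, {#}) #}
     + image_mset (\<lambda>(a, b). (a, Bplus_forest b)) (fold_mset tmul tone (image_mset cop_tree ts))"

definition cop :: "forest \<Rightarrow> (forest \<times> forest) multiset" where
  "cop g = fold_mset tmul tone (image_mset cop_tree g)"

definition counit :: "forest \<Rightarrow> real" where
  "counit g = (if g = {#} then 1 else 0)"

definition conv :: "(forest \<Rightarrow> real) \<Rightarrow> (forest \<Rightarrow> real) \<Rightarrow> forest \<Rightarrow> real" where
  "conv \<alpha> \<beta> g = (\<Sum>\<^sub># (image_mset (\<lambda>(a, b). \<alpha> a * \<beta> b) (cop g)))"

primrec convpow :: "(forest \<Rightarrow> real) \<Rightarrow> nat \<Rightarrow> forest \<Rightarrow> real" where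
  "convpow \<alpha> 0 = counit"
| "convpow \<alpha> (Suc n) = conv \<alpha> (convpow \<alpha> n)"

definition conv_inv :: "(forest \<Rightarrow> real) \<Rightarrow> forest \<Rightarrow> real" where
  "conv_inv \<phi> = (THE \<psi>. \<forall>g. conv \<psi> \<phi> g = counit g)"

primrec tnodes :: "tree \<Rightarrow> nat" where
  "tnodes (Node ts) = 1 + \<Sum>\<^sub># (image_mset tnodes ts)"

definition fnodes :: "forest \<Rightarrow> nat" where
  "fnodes g = \<Sum>\<^sub># (image_mset tnodes g)"

definition mellin :: "(real \<Rightarrow> real) \<Rightarrow> real \<Rightarrow> real" where
  "mellin f z = integral {0<..} (\<lambda>\<zeta>. f \<zeta> * \<zeta> powr (- z))"

primrec treefac :: "(real \<Rightarrow> real) \<Rightarrow> real \<Rightarrow> tree \<Rightarrow> real" where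
  "treefac F z (Node ts) = F (z * real (tnodes (Node ts))) * \<Prod>\<^sub># (image_mset (treefac F z) ts)"

definition phi :: "(real \<Rightarrow> real) \<Rightarrow> real \<Rightarrow> real \<Rightarrow> forest \<Rightarrow> real" where
  "phi F s z g = s powr (- z * real (fnodes g)) * \<Prod>\<^sub># (image_mset (treefac F z) g)"

definition phiR :: "(real \<Rightarrow> real) \<Rightarrow> real \<Rightarrow> real \<Rightarrow> real \<Rightarrow> forest \<Rightarrow> real" where
  "phiR F \<mu> s z g = conv (conv_inv (phi F \<mu> z)) (phi F s z) g"

definition Ppoly :: "(real \<Rightarrow> real) \<Rightarrow> real \<Rightarrow> forest \<Rightarrow> real poly" where
  "Ppoly F \<mu> g = (THE p. \<forall>s>0. ((\<lambda>z. phiR F \<mu> s z g) \<longlongrightarrow> poly p (ln (s / \<mu>))) (at_right 0))"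

definition sigma :: "(real \<Rightarrow> real) \<Rightarrow> real \<Rightarrow> forest \<Rightarrow> real" where
  "sigma F \<mu> g = - poly (pderiv (Ppoly F \<mu> g)) 0"

end

theory Submission
  imports Defs
begin


definition padd :: "forest \<times> forest \<Rightarrow> forest \<times> forest \<Rightarrow> forest \<times> forest" where
  "padd p q = (fst p + fst q, snd p + snd q)"

lemma image_mset_sum_mset: "image_mset h (\<Sum>\<^sub># MM) = \<Sum>\<^sub># (image_mset (image_mset h) MM)"
  by (induction MM) auto

lemma sum_mset_sum_mset: "sum_mset (\<Sum>\<^sub># MM) = (\<Sum>M\<in>#MM. sum_mset M)"
  by (induction MM) auto

lemma tmul_alt: "tmul A B = \<Sum>\<^sub># (image_mset (\<lambda>p. image_mset (\<lambda>q. padd p q) B) A)"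
  unfolding tmul_def padd_def
  by (intro arg_cong[where f=sum_mset] image_mset_cong) (auto split: prod.splits intro!: image_mset_cong)

lemma sum_tmul: "(\<Sum>x\<in>#tmul A B. h x) = (\<Sum>p\<in>#A. \<Sum>q\<in>#B. h (padd p q))"
  unfolding tmul_alt image_mset_sum_mset sum_mset_sum_mset
  by (simp add: multiset.map_comp comp_def)

lemma mset_eq_by_sums:
  assumes "\<And>h::('a \<Rightarrow> nat). (\<Sum>x\<in>#M. h x) = (\<Sum>x\<in>#N. h x)"
  shows "M = N"
proof (rule multiset_eqI)
  fix e
  have "(\<Sum>x\<in>#M. (\<lambda>x. if x = e then 1::nat else 0) x) = (\<Sum>x\<in>#N. (\<lambda>x. if x = e then 1 else 0) x)"
    by (rule assms)
  then show "count M e = count N e" by (simp add: sum_mset_delta)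
qed

lemma tmul_comm: "tmul A B = tmul B A"
  apply (rule mset_eq_by_sums)
  apply (simp add: sum_tmul)
  apply (subst sum_mset.swap)
  apply (simp add: padd_def add.commute)
  done

lemma tmul_assoc: "tmul (tmul A B) C = tmul A (tmul B C)"
  apply (rule mset_eq_by_sums)
  apply (simp add: sum_tmul)
  apply (simp add: padd_def add.assoc)
  done

lemma tmul_tone: "tmul A tone = A"
  apply (rule mset_eq_by_sums)
  apply (simp add: sum_tmul tone_def padd_def)
  done

lemma tmul_lcomm: "tmul y (tmul x z) = tmul x (tmul y z)"
  by (metis tmul_assoc tmul_comm)

interpretation tmul_cfc: comp_fun_commute tmul
  by standard (simp add: fun_eq_iff tmul_lcomm)

lemma fold_tmul_gen: "fold_mset tmul X M = tmul X (fold_mset tmul tone M)"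
proof (induction M)
  case empty then show ?case by (simp add: tmul_tone)
next
  case (add x M)
  have "fold_mset tmul X (add_mset x M) = tmul x (fold_mset tmul X M)"
    by (rule tmul_cfc.fold_mset_add_mset)
  also have "\<dots> = tmul x (tmul X (fold_mset tmul tone M))" by (simp only: add.IH)
  also have "\<dots> = tmul X (tmul x (fold_mset tmul tone M))" by (rule tmul_lcomm)
  also have "\<dots> = tmul X (fold_mset tmul tone (add_mset x M))"
    by (simp only: tmul_cfc.fold_mset_add_mset)
  finally show ?case .
qed

lemma cop_add: "cop (g1 + g2) = tmul (cop g1) (cop g2)"
  unfolding cop_def image_mset_union tmul_cfc.fold_mset_union by (rule fold_tmul_gen)

lemma cop_empty: "cop {#} = tone" by (simp add: cop_def)

lemma cop_single: "cop {#t#} = cop_tree t"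
  by (simp add: cop_def tmul_tone)

lemma cop_Node: "cop {#Node ts#} = add_mset ({#Node ts#}, {#}) (image_mset (\<lambda>p. (fst p, Bplus_forest (snd p))) (cop ts))"
  unfolding cop_single cop_tree.simps cop_def[symmetric]
  by (simp add: case_prod_beta' del: cop_tree.simps)

lemma sum_cop_add: "(\<Sum>x\<in>#cop (g1+g2). h x) = (\<Sum>p\<in>#cop g1. \<Sum>q\<in>#cop g2. h (padd p q))"
  by (simp add: cop_add sum_tmul)

lemma forest_induct:
  assumes A0: "P {#}" and A1: "\<And>g1 g2. P g1 \<Longrightarrow> P g2 \<Longrightarrow> P (g1 + g2)"
    and A2: "\<And>ts. P ts \<Longrightarrow> P {#Node ts#}"
  shows "P g"
proof -
  have M: "(\<And>x. x \<in># M \<Longrightarrow> P {#x#}) \<Longrightarrow> P M" for M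
  proof (induction M)
    case empty then show ?case using A0 by simp
  next
    case (add x M)
    have 1: "P M" by (rule add.IH) (rule add.prems, simp)
    have 2: "P {#x#}" by (rule add.prems) simp
    have "P (M + {#x#})" by (rule A1[OF 1 2])
    then show ?case by simp
  qed
  have T: "P {#t#}" for t
  proof (induction t)
    case (Node ts)
    have "P ts" by (rule M) (rule Node.IH, simp)
    then show ?case by (rule A2)
  qed
  show ?thesis by (rule M) (rule T)
qed




lemma sum_mset_cong: "(\<And>x. x \<in># M \<Longrightarrow> f x = g x) \<Longrightarrow> (\<Sum>x\<in>#M. f x) = (\<Sum>x\<in>#M. g x)"
  by (metis image_mset_cong)

lemma sum_mset_if_out: "(\<Sum>x\<in>#M. if c then f x else (0::'a::comm_monoid_add)) = (if c then (\<Sum>x\<in>#M. f x) else 0)"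
  by (cases c) simp_all

lemma fnodes_add[simp]: "fnodes (a + b) = fnodes a + fnodes b"
  by (simp add: fnodes_def)

lemma fnodes_empty[simp]: "fnodes {#} = 0"
  by (simp add: fnodes_def)

lemma fnodes_add_mset[simp]: "fnodes (add_mset t g) = tnodes t + fnodes g"
  by (simp add: fnodes_def)

lemma tnodes_Node[simp]: "tnodes (Node ts) = Suc (fnodes ts)"
  by (simp add: fnodes_def)

declare tnodes.simps[simp del]

lemma tnodes_pos: "tnodes t > 0"
  by (cases t) simp

lemma fnodes_eq_0: "fnodes g = 0 \<longleftrightarrow> g = {#}"
  by (induction g) (auto simp: tnodes_pos)

lemma fnodes_Bplus[simp]: "fnodes (Bplus_forest b) = Suc (fnodes b)"
  by (simp add: Bplus_forest_def tnodes_Node fnodes_def)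

lemma Bplus_ne[simp]: "Bplus_forest b \<noteq> {#}"
  by (simp add: Bplus_forest_def)

lemma Bplus_inj: "Bplus_forest a = Bplus_forest b \<longleftrightarrow> a = b"
  by (simp add: Bplus_forest_def)

lemma cop_Node': "cop (Bplus_forest ts) = add_mset (Bplus_forest ts, {#}) (image_mset (\<lambda>p. (fst p, Bplus_forest (snd p))) (cop ts))"
  using cop_Node[of ts] by (simp add: Bplus_forest_def)

lemma cop_nodes: "p \<in># cop g \<Longrightarrow> fnodes (fst p) + fnodes (snd p) = fnodes g"
proof (induction g arbitrary: p rule: forest_induct)
  case 1 then show ?case by (simp add: cop_empty tone_def)
next
  case (2 g1 g2)
  from 2(3) obtain p1 p2 where "p1 \<in># cop g1" "p2 \<in># cop g2" "p = padd p1 p2"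
    by (auto simp: cop_add tmul_alt)
  with 2(1)[of p1] 2(2)[of p2] show ?case by (simp add: padd_def)
next
  case (3 ts)
  then show ?case by (auto simp: cop_Node tnodes_Node)
qed

lemma rcounit: "(\<Sum>p\<in>#cop g. if snd p = {#} then h (fst p) else (0::real)) = h g"
proof (induction g arbitrary: h rule: forest_induct)
  case 1 then show ?case by (simp add: cop_empty tone_def)
next
  case (2 g1 g2)
  have "(\<Sum>p\<in>#cop (g1+g2). if snd p = {#} then h (fst p) else (0::real))
      = (\<Sum>p1\<in>#cop g1. if snd p1 = {#} then (\<Sum>p2\<in>#cop g2. if snd p2 = {#} then h (fst p1 + fst p2) else 0) else 0)"
    unfolding sum_cop_add
  proof (intro sum_mset_cong)
    fix p1 assume "p1 \<in># cop g1"
    show "(\<Sum>q\<in>#cop g2. if snd (padd p1 q) = {#} then h (fst (padd p1 q)) else 0) =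
      (if snd p1 = {#} then \<Sum>p2\<in>#cop g2. if snd p2 = {#} then h (fst p1 + fst p2) else 0 else 0)"
      by (cases "snd p1 = {#}") (auto simp: padd_def intro!: sum_mset_cong)
  qed
  also have "\<dots> = (\<Sum>p1\<in>#cop g1. if snd p1 = {#} then h (fst p1 + g2) else 0)"
    using 2(2)[of "\<lambda>a. h (_ + a)"] by (intro sum_mset_cong) (simp add: padd_def)
  also have "\<dots> = h (g1 + g2)"
    using 2(1)[of "\<lambda>a. h (a + g2)"] by simp
  finally show ?case .
next
  case (3 ts)
  then show ?case by (simp add: cop_Node multiset.map_comp comp_def)
qed

lemma lcounit: "(\<Sum>p\<in>#cop g. if fst p = {#} then h (snd p) else (0::real)) = h g"
proof (induction g arbitrary: h rule: forest_induct)
  case 1 then show ?case by (simp add: cop_empty tone_def)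
next
  case (2 g1 g2)
  have "(\<Sum>p\<in>#cop (g1+g2). if fst p = {#} then h (snd p) else (0::real))
      = (\<Sum>p1\<in>#cop g1. if fst p1 = {#} then (\<Sum>p2\<in>#cop g2. if fst p2 = {#} then h (snd p1 + snd p2) else 0) else 0)"
    unfolding sum_cop_add
  proof (intro sum_mset_cong)
    fix p1 assume "p1 \<in># cop g1"
    show "(\<Sum>q\<in>#cop g2. if fst (padd p1 q) = {#} then h (snd (padd p1 q)) else 0) =
      (if fst p1 = {#} then \<Sum>p2\<in>#cop g2. if fst p2 = {#} then h (snd p1 + snd p2) else 0 else 0)"
      by (cases "fst p1 = {#}") (auto simp: padd_def intro!: sum_mset_cong)
  qed
  also have "\<dots> = (\<Sum>p1\<in>#cop g1. if fst p1 = {#} then h (snd p1 + g2) else 0)"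
    using 2(2)[of "\<lambda>a. h (_ + a)"] by (intro sum_mset_cong) (simp add: padd_def)
  also have "\<dots> = h (g1 + g2)"
    using 2(1)[of "\<lambda>a. h (a + g2)"] by simp
  finally show ?case .
next
  case (3 ts)
  have "(\<Sum>p\<in>#cop {#Node ts#}. if fst p = {#} then h (snd p) else (0::real))
      = (\<Sum>p\<in>#cop ts. if fst p = {#} then (h \<circ> Bplus_forest) (snd p) else 0)"
    by (simp add: cop_Node multiset.map_comp comp_def cong: if_cong)
  also have "\<dots> = h {#Node ts#}" using 3[of "h \<circ> Bplus_forest"] by (simp add: Bplus_forest_def)
  finally show ?case .
qed




lemma coassoc:
  fixes h :: "forest \<Rightarrow> forest \<Rightarrow> forest \<Rightarrow> real"
  shows "(\<Sum>p\<in>#cop g. \<Sum>q\<in>#cop (fst p). h (fst q) (snd q) (snd p))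
       = (\<Sum>p\<in>#cop g. \<Sum>q\<in>#cop (snd p). h (fst p) (fst q) (snd q))"
proof (induction g arbitrary: h rule: forest_induct)
  case 1 then show ?case by (simp add: cop_empty tone_def)
next
  case (2 g1 g2)
  define K where "K x y z = (\<Sum>p2\<in>#cop g2. \<Sum>q2\<in>#cop (snd p2). h (x + fst p2) (y + fst q2) (z + snd q2))" for x y z
  have E: "(\<Sum>p2\<in>#cop g2. \<Sum>q2\<in>#cop (fst p2). h (x + fst q2) (y + snd q2) (z + snd p2)) = K x y z" for x y z
    unfolding K_def using 2(2)[of "\<lambda>a b c. h (x + a) (y + b) (z + c)"] by simp
  have "(\<Sum>p\<in>#cop (g1+g2). \<Sum>q\<in>#cop (fst p). h (fst q) (snd q) (snd p))
     = (\<Sum>p1\<in>#cop g1. \<Sum>p2\<in>#cop g2. \<Sum>q1\<in>#cop (fst p1). \<Sum>q2\<in>#cop (fst p2).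
           h (fst q1 + fst q2) (snd q1 + snd q2) (snd p1 + snd p2))"
    by (simp add: sum_cop_add padd_def)
  also have "\<dots> = (\<Sum>p1\<in>#cop g1. \<Sum>q1\<in>#cop (fst p1). \<Sum>p2\<in>#cop g2. \<Sum>q2\<in>#cop (fst p2).
           h (fst q1 + fst q2) (snd q1 + snd q2) (snd p1 + snd p2))"
    by (intro sum_mset_cong) (rule sum_mset.swap)
  also have "\<dots> = (\<Sum>p1\<in>#cop g1. \<Sum>q1\<in>#cop (fst p1). K (fst q1) (snd q1) (snd p1))"
    by (simp add: E)
  also have "\<dots> = (\<Sum>p1\<in>#cop g1. \<Sum>q1\<in>#cop (snd p1). K (fst p1) (fst q1) (snd q1))"
    by (rule 2(1))
  also have "\<dots> = (\<Sum>p1\<in>#cop g1. \<Sum>p2\<in>#cop g2. \<Sum>q1\<in>#cop (snd p1). \<Sum>q2\<in>#cop (snd p2).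
           h (fst p1 + fst p2) (fst q1 + fst q2) (snd q1 + snd q2))"
    unfolding K_def by (intro sum_mset_cong) (rule sum_mset.swap)
  also have "\<dots> = (\<Sum>p\<in>#cop (g1+g2). \<Sum>q\<in>#cop (snd p). h (fst p) (fst q) (snd q))"
    by (simp add: sum_cop_add padd_def)
  finally show ?case .
next
  case (3 ts)
  have L: "(\<Sum>p\<in>#cop {#Node ts#}. \<Sum>q\<in>#cop (fst p). h (fst q) (snd q) (snd p))
     = h {#Node ts#} {#} {#} + (\<Sum>p\<in>#cop ts. h (fst p) (Bplus_forest (snd p)) {#})
       + (\<Sum>p\<in>#cop ts. \<Sum>q\<in>#cop (fst p). h (fst q) (snd q) (Bplus_forest (snd p)))"
    by (simp add: cop_Node multiset.map_comp comp_def)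
  have R: "(\<Sum>p\<in>#cop {#Node ts#}. \<Sum>q\<in>#cop (snd p). h (fst p) (fst q) (snd q))
     = h {#Node ts#} {#} {#} + (\<Sum>p\<in>#cop ts. h (fst p) (Bplus_forest (snd p)) {#})
       + (\<Sum>p\<in>#cop ts. \<Sum>q\<in>#cop (snd p). h (fst p) (fst q) (Bplus_forest (snd q)))"
    by (simp add: cop_Node cop_Node' multiset.map_comp comp_def sum_mset.distrib cop_empty tone_def)
  have I: "(\<Sum>p\<in>#cop ts. \<Sum>q\<in>#cop (fst p). h (fst q) (snd q) (Bplus_forest (snd p)))
     = (\<Sum>p\<in>#cop ts. \<Sum>q\<in>#cop (snd p). h (fst p) (fst q) (Bplus_forest (snd q)))"
    using 3[of "\<lambda>x y z. h x y (Bplus_forest z)"] by simp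
  show ?case unfolding L R I ..
qed

lemma conv_alt: "conv \<alpha> \<beta> g = (\<Sum>p\<in>#cop g. \<alpha> (fst p) * \<beta> (snd p))"
  by (simp add: conv_def case_prod_beta')

lemma conv_counit_left[simp]: "conv counit \<beta> g = \<beta> g"
proof -
  have "\<And>p. counit (fst p) * \<beta> (snd p) = (if fst p = {#} then \<beta> (snd p) else 0)"
    by (simp add: counit_def)
  then show ?thesis unfolding conv_alt using lcounit[where g=g and h=\<beta>] by simp
qed

lemma conv_counit_right[simp]: "conv \<alpha> counit g = \<alpha> g"
proof -
  have "\<And>p. \<alpha> (fst p) * counit (snd p) = (if snd p = {#} then \<alpha> (fst p) else 0)"
    by (simp add: counit_def)
  then show ?thesis unfolding conv_alt using rcounit[where g=g and h=\<alpha>] by simp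
qed

lemma conv_assoc: "conv (conv \<alpha> \<beta>) \<gamma> g = conv \<alpha> (conv \<beta> \<gamma>) g"
proof -
  have "conv (conv \<alpha> \<beta>) \<gamma> g = (\<Sum>p\<in>#cop g. \<Sum>q\<in>#cop (fst p). (\<lambda>x y z. \<alpha> x * \<beta> y * \<gamma> z) (fst q) (snd q) (snd p))"
    unfolding conv_alt by (simp add: sum_mset_distrib_right)
  also have "\<dots> = (\<Sum>p\<in>#cop g. \<Sum>q\<in>#cop (snd p). (\<lambda>x y z. \<alpha> x * \<beta> y * \<gamma> z) (fst p) (fst q) (snd q))"
    by (rule coassoc)
  also have "\<dots> = conv \<alpha> (conv \<beta> \<gamma>) g"
    unfolding conv_alt by (simp add: sum_mset_distrib_left mult.assoc)
  finally show ?thesis .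
qed

lemma conv_split: "conv X \<phi> g = X g * \<phi> {#} + (\<Sum>p\<in>#cop g. if snd p = {#} then 0 else X (fst p) * \<phi> (snd p))"
proof -
  have "conv X \<phi> g = (\<Sum>p\<in>#cop g. (if snd p = {#} then X (fst p) * \<phi> {#} else 0)
            + (if snd p = {#} then 0 else X (fst p) * \<phi> (snd p)))"
    unfolding conv_alt by (intro sum_mset_cong) auto
  also have "\<dots> = X g * \<phi> {#} + (\<Sum>p\<in>#cop g. if snd p = {#} then 0 else X (fst p) * \<phi> (snd p))"
    by (simp only: sum_mset.distrib rcounit[where g=g and h="\<lambda>a. X a * \<phi> {#}"])
  finally show ?thesis .
qed

lemma cop_snd_ne: "p \<in># cop g \<Longrightarrow> snd p \<noteq> {#} \<Longrightarrow> fnodes (fst p) < fnodes g"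
  using cop_nodes[of p g] fnodes_eq_0[of "snd p"] by linarith

lemma cop_fst_ne: "p \<in># cop g \<Longrightarrow> fst p \<noteq> {#} \<Longrightarrow> fnodes (snd p) < fnodes g"
  using cop_nodes[of p g] fnodes_eq_0[of "fst p"] by linarith

declare image_mset_cong[fundef_cong]

function linv :: "(forest \<Rightarrow> real) \<Rightarrow> forest \<Rightarrow> real" where
  "linv \<phi> g = counit g - (\<Sum>p\<in>#cop g. if snd p = {#} then 0 else linv \<phi> (fst p) * \<phi> (snd p))"
  by pat_completeness auto
termination
  by (relation "Wellfounded.measure (\<lambda>(\<phi>, g). fnodes g)") (auto dest: cop_snd_ne)

lemma linv_left: "\<phi> {#} = 1 \<Longrightarrow> conv (linv \<phi>) \<phi> g = counit g"
  unfolding conv_split by (subst linv.simps[of \<phi> g]) simp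

lemma conv_uniq:
  assumes "\<phi> {#} = 1" "\<And>g. conv X \<phi> g = conv Y \<phi> g"
  shows "X = Y"
proof -
  have "\<forall>g. fnodes g = n \<longrightarrow> X g = Y g" for n
  proof (induction n rule: less_induct)
    case (less n)
    show ?case
    proof (intro allI impI)
      fix g assume g: "fnodes g = n"
      have "(\<Sum>p\<in>#cop g. if snd p = {#} then 0 else X (fst p) * \<phi> (snd p))
          = (\<Sum>p\<in>#cop g. if snd p = {#} then 0 else Y (fst p) * \<phi> (snd p))"
        using less g by (intro sum_mset_cong) (auto dest: cop_snd_ne)
      then show "X g = Y g" using assms(2)[of g] unfolding conv_split by (simp add: assms(1))
    qed
  qed
  then show ?thesis by auto
qed

lemma conv_inv_eq: "\<phi> {#} = 1 \<Longrightarrow> (\<And>g. conv \<psi> \<phi> g = counit g) \<Longrightarrow> conv_inv \<phi> = \<psi>"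
  unfolding conv_inv_def
  by (rule the_equality) (auto intro: conv_uniq)

lemma conv_inv_left: "\<phi> {#} = 1 \<Longrightarrow> conv (conv_inv \<phi>) \<phi> g = counit g"
  using conv_inv_eq[of \<phi> "linv \<phi>"] linv_left[of \<phi>] by simp

lemma conv_inv_right: "\<phi> {#} = 1 \<Longrightarrow> conv \<phi> (conv_inv \<phi>) g = counit g"
proof -
  assume 1: "\<phi> {#} = 1"
  have "conv \<phi> (conv_inv \<phi>) = counit"
  proof (rule conv_uniq[where \<phi>=\<phi>, OF 1])
    fix g
    show "conv (conv \<phi> (conv_inv \<phi>)) \<phi> g = conv counit \<phi> g"
    proof -
      have "conv (conv_inv \<phi>) \<phi> = counit" by (rule ext) (rule conv_inv_left[where \<phi>=\<phi>, OF 1])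
      then show ?thesis by (simp add: conv_assoc)
    qed
  qed
  then show ?thesis by simp
qed




definition Phi :: "(real \<Rightarrow> real) \<Rightarrow> real \<Rightarrow> forest \<Rightarrow> real" where
  "Phi F z g = \<Prod>\<^sub># (image_mset (treefac F z) g)"

definition Psi :: "(real \<Rightarrow> real) \<Rightarrow> real \<Rightarrow> forest \<Rightarrow> real" where
  "Psi F z = conv_inv (Phi F z)"

definition Pm :: "(real \<Rightarrow> real) \<Rightarrow> nat \<Rightarrow> real \<Rightarrow> forest \<Rightarrow> real" where
  "Pm F m z b = real (fnodes b) ^ m * Phi F z b"

definition Dm :: "(real \<Rightarrow> real) \<Rightarrow> nat \<Rightarrow> real \<Rightarrow> forest \<Rightarrow> real" where
  "Dm F m z = conv (Psi F z) (Pm F m z)"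

definition Yop :: "(forest \<Rightarrow> real) \<Rightarrow> forest \<Rightarrow> real" where
  "Yop \<alpha> g = real (fnodes g) * \<alpha> g"

lemma Phi_empty[simp]: "Phi F z {#} = 1" by (simp add: Phi_def)

lemma Phi_add: "Phi F z (a + b) = Phi F z a * Phi F z b" by (simp add: Phi_def)

lemma Phi_Bplus: "Phi F z (Bplus_forest b) = F (z * real (Suc (fnodes b))) * Phi F z b"
  by (simp add: Phi_def Bplus_forest_def)

lemma phi_Phi: "phi F s z g = s powr (- z * real (fnodes g)) * Phi F z g"
  by (simp add: phi_def Phi_def)

lemma Psi_left: "conv (Psi F z) (Phi F z) g = counit g"
  unfolding Psi_def by (rule conv_inv_left) simp

lemma Psi_right: "conv (Phi F z) (Psi F z) g = counit g"
  unfolding Psi_def by (rule conv_inv_right) simp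

lemma conv_add2: "conv \<alpha> (\<lambda>x. \<beta> x + \<gamma> x) g = conv \<alpha> \<beta> g + conv \<alpha> \<gamma> g"
  unfolding conv_alt by (simp add: distrib_left sum_mset.distrib)

lemma cop_fst_le: "p \<in># cop g \<Longrightarrow> fnodes (fst p) \<le> fnodes g"
  using cop_nodes[of p g] by linarith

lemma cop_snd_le: "p \<in># cop g \<Longrightarrow> fnodes (snd p) \<le> fnodes g"
  using cop_nodes[of p g] by linarith

lemma Yop_conv: "Yop (conv \<alpha> \<beta>) g = conv (Yop \<alpha>) \<beta> g + conv \<alpha> (Yop \<beta>) g"
proof -
  have "Yop (conv \<alpha> \<beta>) g = (\<Sum>p\<in>#cop g. real (fnodes g) * (\<alpha> (fst p) * \<beta> (snd p)))"
    unfolding Yop_def conv_alt by (simp add: sum_mset_distrib_left)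
  also have "\<dots> = (\<Sum>p\<in>#cop g. real (fnodes (fst p)) * \<alpha> (fst p) * \<beta> (snd p) + \<alpha> (fst p) * (real (fnodes (snd p)) * \<beta> (snd p)))"
  proof (intro sum_mset_cong)
    fix p assume "p \<in># cop g"
    then have "real (fnodes g) = real (fnodes (fst p)) + real (fnodes (snd p))"
      using cop_nodes[of p g] by simp
    then show "real (fnodes g) * (\<alpha> (fst p) * \<beta> (snd p)) = real (fnodes (fst p)) * \<alpha> (fst p) * \<beta> (snd p) + \<alpha> (fst p) * (real (fnodes (snd p)) * \<beta> (snd p))"
      by (simp add: algebra_simps)
  qed
  also have "\<dots> = conv (Yop \<alpha>) \<beta> g + conv \<alpha> (Yop \<beta>) g"
    unfolding conv_alt Yop_def by (simp add: sum_mset.distrib)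
  finally show ?thesis .
qed

lemma sum_mset_product2: "(\<Sum>i\<in>#A. f i) * (\<Sum>j\<in>#B. g j) = (\<Sum>i\<in>#A. \<Sum>j\<in>#B. f i * g j :: real)"
  unfolding sum_mset_distrib_right by (simp add: sum_mset_distrib_left)

lemma Dm_0: "Dm F 0 z g = counit g"
  unfolding Dm_def Pm_def by (simp add: Psi_left)

lemma Pm_Suc: "Pm F (Suc m) z = Yop (Pm F m z)"
  by (simp add: fun_eq_iff Pm_def Yop_def)

lemma Pm_0: "Pm F 0 z = Phi F z"
  by (simp add: fun_eq_iff Pm_def)

lemma Pm_1: "Pm F 1 z = Yop (Phi F z)"
  by (simp add: fun_eq_iff Pm_def Yop_def)

lemma conv_Phi_Dm: "conv (Phi F z) (Dm F m z) = Pm F m z"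
proof -
  have "conv (Phi F z) (Psi F z) = counit" by (rule ext) (rule Psi_right)
  then show ?thesis
    by (intro ext) (simp add: Dm_def conv_assoc[symmetric])
qed

lemma Dm_Suc: "Dm F (Suc m) z g = conv (Dm F 1 z) (Dm F m z) g + real (fnodes g) * Dm F m z g"
proof -
  have P: "Pm F (Suc m) z = (\<lambda>x. conv (Yop (Phi F z)) (Dm F m z) x + conv (Phi F z) (Yop (Dm F m z)) x)"
    by (rule ext, subst Pm_Suc, subst conv_Phi_Dm[where F=F and z=z and m=m, symmetric], rule Yop_conv)
  have C: "conv (Psi F z) (Phi F z) = counit" by (rule ext) (rule Psi_left)
  have "Dm F (Suc m) z g = conv (Psi F z) (conv (Yop (Phi F z)) (Dm F m z)) g
          + conv (Psi F z) (conv (Phi F z) (Yop (Dm F m z))) g"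
    unfolding Dm_def[of F "Suc m"] P by (rule conv_add2)
  also have "\<dots> = conv (Dm F 1 z) (Dm F m z) g + Yop (Dm F m z) g"
    unfolding conv_assoc[symmetric] C by (simp add: Dm_def Pm_Suc Pm_0)
  finally show ?thesis by (simp add: Yop_def)
qed

lemma conv_mult:
  assumes "\<And>a b. \<alpha> (a + b) = \<alpha> a * \<alpha> b" "\<And>a b. \<beta> (a + b) = \<beta> a * \<beta> b"
  shows "conv \<alpha> \<beta> (g1 + g2) = conv \<alpha> \<beta> g1 * conv \<alpha> \<beta> g2"
proof -
  have "conv \<alpha> \<beta> (g1 + g2) = (\<Sum>p\<in>#cop g1. \<Sum>q\<in>#cop g2. (\<alpha> (fst p) * \<beta> (snd p)) * (\<alpha> (fst q) * \<beta> (snd q)))"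
    unfolding conv_alt sum_cop_add by (simp add: padd_def assms mult_ac)
  also have "\<dots> = conv \<alpha> \<beta> g1 * conv \<alpha> \<beta> g2"
    unfolding conv_alt sum_mset_product2 ..
  finally show ?thesis .
qed

lemma Psi_empty: "Psi F z {#} = 1"
  using Psi_left[of F z "{#}"] by (simp add: conv_alt cop_empty tone_def counit_def)

lemma Psi_mult: "Psi F z (a + b) = Psi F z a * Psi F z b"
proof -
  let ?\<psi> = "Psi F z" and ?\<Phi> = "Phi F z"
  define chi where "chi g = \<Prod>\<^sub># (image_mset (\<lambda>t. Psi F z {#t#}) g)" for g
  have chim: "chi (a + b) = chi a * chi b" for a b by (simp add: chi_def)
  have \<Phi>m: "?\<Phi> (a + b) = ?\<Phi> a * ?\<Phi> b" for a b by (rule Phi_add)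
  have "\<forall>g. fnodes g = n \<longrightarrow> ?\<psi> g = chi g" for n
  proof (induction n rule: less_induct)
    case (less n)
    show ?case
    proof (intro allI impI)
      fix g assume gn: "fnodes g = n"
      show "?\<psi> g = chi g"
      proof (cases g)
        case empty then show ?thesis by (simp add: chi_def Psi_empty)
      next
        case (add t g')
        show ?thesis
        proof (cases "g' = {#}")
          case True then show ?thesis using add by (simp add: chi_def)
        next
          case False
          have gsplit: "g = {#t#} + g'" using add by simp
          have small: "chi a = ?\<psi> a" if "fnodes a < n" for a using less that by auto
          have eqh: "conv chi ?\<Phi> h = counit h" if "fnodes h < n" for h
          proof -
            have "conv chi ?\<Phi> h = conv ?\<psi> ?\<Phi> h"
              unfolding conv_alt using that by (intro sum_mset_cong) (auto intro!: small dest: cop_fst_le)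
            then show ?thesis by (simp add: Psi_left)
          qed
          have n1: "fnodes {#t#} < n" using gn gsplit False fnodes_eq_0[of g'] by simp
          have n2: "fnodes g' < n" using gn gsplit tnodes_pos[of t] by simp
          have "conv chi ?\<Phi> g = counit g"
            unfolding gsplit conv_mult[of chi ?\<Phi>, OF chim \<Phi>m] eqh[OF n1] eqh[OF n2]
            using False by (simp add: counit_def)
          moreover have "conv ?\<psi> ?\<Phi> g = counit g" by (rule Psi_left)
          moreover have "(\<Sum>p\<in>#cop g. if snd p = {#} then 0 else chi (fst p) * ?\<Phi> (snd p))
              = (\<Sum>p\<in>#cop g. if snd p = {#} then 0 else ?\<psi> (fst p) * ?\<Phi> (snd p))"
            using gn by (intro sum_mset_cong) (auto intro!: small dest: cop_snd_ne)
          ultimately show ?thesis unfolding conv_split by simp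
        qed
      qed
    qed
  qed
  then have "?\<psi> = chi" by auto
  then show ?thesis by (simp add: chim)
qed

lemma Dm1_add: "Dm F 1 z (a + b) = Dm F 1 z a * counit b + counit a * Dm F 1 z b"
proof -
  let ?\<psi> = "Psi F z" and ?\<Phi> = "Phi F z"
  have "Dm F 1 z (a + b) = (\<Sum>p1\<in>#cop a. \<Sum>p2\<in>#cop b.
      (?\<psi> (fst p1) * (real (fnodes (snd p1)) * ?\<Phi> (snd p1))) * (?\<psi> (fst p2) * ?\<Phi> (snd p2))
    + (?\<psi> (fst p1) * ?\<Phi> (snd p1)) * (?\<psi> (fst p2) * (real (fnodes (snd p2)) * ?\<Phi> (snd p2))))"
    unfolding Dm_def conv_alt sum_cop_add Pm_def
    by (simp add: padd_def Psi_mult Phi_add algebra_simps)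
  also have "\<dots> = Dm F 1 z a * conv ?\<psi> ?\<Phi> b + conv ?\<psi> ?\<Phi> a * Dm F 1 z b"
    unfolding Dm_def conv_alt Pm_def sum_mset_product2 power_one_right
    by (simp only: sum_mset.distrib)
  finally show ?thesis by (simp add: Psi_left)
qed

lemma conv_inv_phi:
  assumes "\<mu> > 0"
  shows "conv_inv (phi F \<mu> z) = (\<lambda>a. \<mu> powr (- z * real (fnodes a)) * Psi F z a)"
proof (rule conv_inv_eq)
  show "phi F \<mu> z {#} = 1" using assms by (simp add: phi_Phi)
  fix g
  have "conv (\<lambda>a. \<mu> powr (- z * real (fnodes a)) * Psi F z a) (phi F \<mu> z) g
      = (\<Sum>p\<in>#cop g. \<mu> powr (- z * real (fnodes g)) * (Psi F z (fst p) * Phi F z (snd p)))"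
    unfolding conv_alt phi_Phi
  proof (intro sum_mset_cong)
    fix p assume "p \<in># cop g"
    then have "real (fnodes g) = real (fnodes (fst p)) + real (fnodes (snd p))"
      using cop_nodes[of p g] by simp
    then have "\<mu> powr (- z * real (fnodes g)) = \<mu> powr (- z * real (fnodes (fst p))) * \<mu> powr (- z * real (fnodes (snd p)))"
      by (simp add: powr_add[symmetric] algebra_simps)
    then show "\<mu> powr (- z * real (fnodes (fst p))) * Psi F z (fst p) * (\<mu> powr (- z * real (fnodes (snd p))) * Phi F z (snd p))
        = \<mu> powr (- z * real (fnodes g)) * (Psi F z (fst p) * Phi F z (snd p))"
      by simp
  qed
  also have "\<dots> = \<mu> powr (- z * real (fnodes g)) * counit g"
    by (simp add: sum_mset_distrib_left[symmetric] conv_alt[symmetric] Psi_left)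
  also have "\<dots> = counit g" using assms by (simp add: counit_def)
  finally show "conv (\<lambda>a. \<mu> powr (- z * real (fnodes a)) * Psi F z a) (phi F \<mu> z) g = counit g" .
qed

lemma phiR_formula:
  assumes "\<mu> > 0" "s > 0"
  shows "phiR F \<mu> s z g = exp (- z * real (fnodes g) * ln \<mu>) *
     (\<Sum>p\<in>#cop g. Psi F z (fst p) * Phi F z (snd p) * exp (- z * real (fnodes (snd p)) * (ln s - ln \<mu>)))"
  unfolding phiR_def conv_inv_phi[OF assms(1)] conv_alt sum_mset_distrib_left
proof (intro sum_mset_cong)
  fix p assume "p \<in># cop g"
  then have e: "real (fnodes g) = real (fnodes (fst p)) + real (fnodes (snd p))"
    using cop_nodes[of p g] by simp
  have "\<mu> powr (- z * real (fnodes (fst p))) * s powr (- z * real (fnodes (snd p)))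
      = exp (- z * real (fnodes g) * ln \<mu>) * exp (- z * real (fnodes (snd p)) * (ln s - ln \<mu>))"
    using assms by (simp add: powr_def exp_add[symmetric] e algebra_simps)
  then show "\<mu> powr (- z * real (fnodes (fst p))) * Psi F z (fst p) * phi F s z (snd p) =
         exp (- z * real (fnodes g) * ln \<mu>) * (Psi F z (fst p) * Phi F z (snd p) * exp (- z * real (fnodes (snd p)) * (ln s - ln \<mu>)))"
    unfolding phi_Phi by (simp add: algebra_simps)
qed




lemma sum_mset_sum_swap: "(\<Sum>x\<in>#M. \<Sum>k\<in>A. f x k) = (\<Sum>k\<in>A. \<Sum>x\<in>#M. f x k :: real)"
  by (induction M) (simp_all add: sum.distrib)

lemma tendsto_sum_mset:
  fixes f :: "_ \<Rightarrow> _ \<Rightarrow> real"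
  shows "(\<And>x. x \<in># M \<Longrightarrow> ((\<lambda>z. f x z) \<longlongrightarrow> l x) F) \<Longrightarrow> ((\<lambda>z. \<Sum>x\<in>#M. f x z) \<longlongrightarrow> (\<Sum>x\<in>#M. l x)) F"
  by (induction M) (auto intro!: tendsto_add)

lemma tendsto_sum_mset_ex:
  fixes f :: "_ \<Rightarrow> _ \<Rightarrow> real"
  assumes "\<And>x. x \<in># M \<Longrightarrow> \<exists>l. ((\<lambda>z. f x z) \<longlongrightarrow> l) F"
  shows "\<exists>l. ((\<lambda>z. \<Sum>x\<in>#M. f x z) \<longlongrightarrow> l) F"
  using assms
proof (induction M)
  case empty then show ?case using tendsto_const by auto
next
  case (add y M)
  have "\<exists>l. ((\<lambda>z. \<Sum>x\<in>#M. f x z) \<longlongrightarrow> l) F" using add.IH add.prems by auto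
  then obtain l2 where l2: "((\<lambda>z. \<Sum>x\<in>#M. f x z) \<longlongrightarrow> l2) F" by blast
  obtain l1 where l1: "((\<lambda>z. f y z) \<longlongrightarrow> l1) F" using add.prems by auto
  show ?case using tendsto_add[OF l1 l2] by auto
qed

lemma ps_taylor:
  fixes a :: "nat \<Rightarrow> real"
  assumes sm: "summable (\<lambda>n. a n * x0^n)" and x0: "x0 \<noteq> 0"
  shows "\<exists>R. isCont R 0 \<and> (\<forall>x. \<bar>x\<bar> < \<bar>x0\<bar> \<longrightarrow> (\<lambda>n. a n * x^n) sums ((\<Sum>n\<le>K. a n * x^n) + x^(Suc K) * R x))"
proof -
  define R where "R x = (suminf (\<lambda>n. a (n + Suc K) * x^n))" for x
  have s1: "summable (\<lambda>n. a (n + Suc K) * x0^(n + Suc K))"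
    using summable_ignore_initial_segment[OF sm, of "Suc K"] .
  have s2: "summable (\<lambda>n. a (n + Suc K) * x0^n)"
  proof -
    have "summable (\<lambda>n. inverse (x0^Suc K) * (a (n + Suc K) * x0^(n + Suc K)))"
      using summable_mult[OF s1] .
    moreover have E: "\<And>n. inverse (x0^Suc K) * (a (n + Suc K) * x0^(n + Suc K)) = a (n + Suc K) * x0^n"
      using x0 by (simp add: power_add field_simps)
    ultimately show ?thesis by (simp only: E)
  qed
  have cont: "isCont R 0" unfolding R_def
    by (rule isCont_powser[OF s2]) (simp add: x0)
  have "(\<lambda>n. a n * x^n) sums ((\<Sum>n\<le>K. a n * x^n) + x^(Suc K) * R x)" if "\<bar>x\<bar> < \<bar>x0\<bar>" for x
  proof -
    have sx: "summable (\<lambda>n. a n * x^n)" using powser_inside[OF sm] that by simp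
    have sxs: "summable (\<lambda>n. a (n + Suc K) * x^n)" using powser_inside[OF s2] that by simp
    have "(suminf (\<lambda>n. a n * x^n)) = (suminf (\<lambda>n. a (n + Suc K) * x^(n + Suc K))) + (\<Sum>n<Suc K. a n * x^n)"
      by (rule suminf_split_initial_segment[OF sx])
    also have "(suminf (\<lambda>n. a (n + Suc K) * x^(n + Suc K))) = x^Suc K * R x"
      unfolding R_def using suminf_mult[OF sxs, of "x^Suc K"] by (simp add: power_add mult_ac)
    finally have "(suminf (\<lambda>n. a n * x^n)) = (\<Sum>n\<le>K. a n * x^n) + x^(Suc K) * R x"
      by (simp add: lessThan_Suc_atMost)
    then show ?thesis using sx by (simp add: sums_iff)
  qed
  with cont show ?thesis by blast
qed

lemma binom_expand: "(z * real (Suc n))^k = (\<Sum>j\<le>k. real (k choose j) * z^(k-j) * (z^j * real n ^ j))"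
proof -
  have "(z * real (Suc n))^k = z^k * (real n + 1)^k" by (simp add: power_mult_distrib add.commute)
  also have "(real n + 1)^k = (\<Sum>j\<le>k. real (k choose j) * real n ^ j)" using binomial_ring[of "real n" 1 k] by simp
  also have "z^k * (\<Sum>j\<le>k. real (k choose j) * real n^j) = (\<Sum>j\<le>k. real (k choose j) * z^(k-j) * (z^j * real n ^ j))"
    unfolding sum_distrib_left
  proof (rule sum.cong[OF refl])
    fix j assume "j \<in> {..k}"
    then have "z^k = z^(k-j) * z^j" by (simp add: power_add[symmetric])
    then show "z^k * (real (k choose j) * real n^j) = real (k choose j) * z^(k-j) * (z^j * real n^j)" by simp
  qed
  finally show ?thesis .
qed

lemma binom_zero_sum: "(\<Sum>j\<le>k. real (k choose j) * 0^(k-j) * X j) = (X k :: real)"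
proof -
  have "\<And>j. j \<in> {..k} \<Longrightarrow> real (k choose j) * 0^(k-j) * X j = (if j = k then X k else 0)" by auto
  then have "(\<Sum>j\<le>k. real (k choose j) * 0^(k-j) * X j) = (\<Sum>j\<le>k. if j = k then X k else 0)"
    by (rule sum.cong[OF refl])
  then show ?thesis by simp
qed

lemma Dm1_empty[simp]: "Dm F 1 z {#} = 0"
  by (simp add: Dm_def conv_alt cop_empty tone_def Pm_def)

lemma Dm1_empty'[simp]: "Dm F (Suc 0) z {#} = 0"
  using Dm1_empty[of F z] by simp

lemma Psi_rec: "Psi F z g = counit g - (\<Sum>p\<in>#cop g. if snd p = {#} then 0 else Psi F z (fst p) * Phi F z (snd p))"
  using Psi_left[of F z g] unfolding conv_split by simp

lemma Dm1_Bplus: "z * Dm F 1 z (Bplus_forest w) = (\<Sum>p\<in>#cop w. Psi F z (fst p) * Phi F z (snd p) * ((z * real (Suc (fnodes (snd p)))) * F (z * real (Suc (fnodes (snd p))))))"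
  unfolding Dm_def conv_alt cop_Node' Pm_def
  by (simp add: Phi_Bplus sum_mset_distrib_left multiset.map_comp comp_def mult_ac del: of_nat_Suc)

lemma Dm_alt: "Dm F j z w = (\<Sum>p\<in>#cop w. Psi F z (fst p) * (real (fnodes (snd p)) ^ j * Phi F z (snd p)))"
  by (simp add: Dm_def conv_alt Pm_def)

locale gm =
  fixes F :: "real \<Rightarrow> real" and a :: "nat \<Rightarrow> real" and r :: real
  assumes r_pos: "r > 0"
    and GF: "\<And>x. 0 < x \<Longrightarrow> x < r \<Longrightarrow> (\<lambda>n. a n * x^n) sums (x * F x)"
begin

lemma G_expand: "\<exists>R \<rho>. \<rho> > 0 \<and> isCont R 0 \<and> (\<forall>x. 0 < x \<longrightarrow> x < \<rho> \<longrightarrow> x * F x = (\<Sum>n\<le>K. a n * x^n) + x^(Suc K) * R x)"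
proof -
  have sm: "summable (\<lambda>n. a n * (r/2)^n)" using GF[of "r/2"] r_pos sums_summable by force
  obtain R where R: "isCont R 0" "\<forall>x. \<bar>x\<bar> < \<bar>r/2\<bar> \<longrightarrow> (\<lambda>n. a n * x^n) sums ((\<Sum>n\<le>K. a n * x^n) + x^(Suc K) * R x)"
    using ps_taylor[OF sm, of K] r_pos by auto
  show ?thesis
  proof (intro exI conjI allI impI)
    show "r/2 > 0" using r_pos by simp
    show "isCont R 0" by (rule R(1))
    fix x assume x: "0 < x" "x < r/2"
    then have "(\<lambda>n. a n * x^n) sums ((\<Sum>n\<le>K. a n * x^n) + x^(Suc K) * R x)" using R(2) by auto
    moreover have "(\<lambda>n. a n * x^n) sums (x * F x)" using GF x by auto
    ultimately show "x * F x = (\<Sum>n\<le>K. a n * x^n) + x^(Suc K) * R x" using sums_unique2 by blast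
  qed
qed

lemma zF_tendsto:
  assumes k: "k > 0"
  shows "((\<lambda>z. z * F (z * k)) \<longlongrightarrow> a 0 / k) (at_right 0)"
proof -
  obtain R \<rho> where R: "\<rho> > 0" "isCont R 0" "\<forall>x. 0 < x \<longrightarrow> x < \<rho> \<longrightarrow> x * F x = (\<Sum>n\<le>0. a n * x^n) + x^(Suc 0) * R x"
    using G_expand[of 0] by blast
  have ev: "eventually (\<lambda>z. (a 0 + (z * k) * R (z * k)) / k = z * F (z * k)) (at_right 0)"
    unfolding eventually_at_right_field
  proof (intro exI conjI allI impI)
    show "\<rho> / k > 0" using R(1) k by simp
    fix z :: real assume "z > 0" "z < \<rho> / k"
    then have "0 < z * k" "z * k < \<rho>" using k by (auto simp: field_simps)
    then have "(z * k) * F (z * k) = a 0 + (z * k) * R (z * k)" using R(3) by simp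
    then show "(a 0 + (z * k) * R (z * k)) / k = z * F (z * k)" using k by (simp add: field_simps)
  qed
  have t0: "((\<lambda>z. z * k) \<longlongrightarrow> 0) (at_right 0)"
    using tendsto_mult[OF tendsto_ident_at[of "0::real" "{0<..}"] tendsto_const[of k]] by simp
  have RT: "((\<lambda>z. R (z * k)) \<longlongrightarrow> R 0) (at_right 0)"
    by (rule isCont_tendsto_compose[OF R(2) t0])
  have "((\<lambda>z. (a 0 + (z * k) * R (z * k)) / k) \<longlongrightarrow> (a 0 + 0 * R 0) / k) (at_right 0)"
    apply (intro tendsto_intros t0 RT) using k by auto
  then show ?thesis using Lim_transform_eventually[OF _ ev] by simp
qed

lemma Phi_pole: "\<exists>l. ((\<lambda>z. z ^ fnodes g * Phi F z g) \<longlongrightarrow> l) (at_right 0)"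
proof (induction g rule: forest_induct)
  case 1 show ?case using tendsto_const by auto
next
  case (2 g1 g2)
  then obtain l1 l2 where l1: "((\<lambda>z. z ^ fnodes g1 * Phi F z g1) \<longlongrightarrow> l1) (at_right 0)"
    and l2: "((\<lambda>z. z ^ fnodes g2 * Phi F z g2) \<longlongrightarrow> l2) (at_right 0)" by blast
  have "(\<lambda>z. z ^ fnodes (g1+g2) * Phi F z (g1+g2)) = (\<lambda>z. (z ^ fnodes g1 * Phi F z g1) * (z ^ fnodes g2 * Phi F z g2))"
    by (simp add: Phi_add power_add fun_eq_iff mult_ac)
  then show ?case using tendsto_mult[OF l1 l2] by auto
next
  case (3 ts)
  obtain l where l: "((\<lambda>z. z ^ fnodes ts * Phi F z ts) \<longlongrightarrow> l) (at_right 0)" using 3 by blast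
  have eq: "(\<lambda>z. z ^ fnodes {#Node ts#} * Phi F z {#Node ts#}) = (\<lambda>z. (z * F (z * real (Suc (fnodes ts)))) * (z ^ fnodes ts * Phi F z ts))"
    using Phi_Bplus[of F _ ts] by (simp add: Bplus_forest_def fun_eq_iff mult_ac del: of_nat_Suc)
  show ?case unfolding eq using tendsto_mult[OF zF_tendsto[of "real (Suc (fnodes ts))"] l] by auto
qed

lemma Psi_pole: "\<exists>l. ((\<lambda>z. z ^ fnodes g * Psi F z g) \<longlongrightarrow> l) (at_right 0)"
proof -
  have "\<forall>g. fnodes g = n \<longrightarrow> (\<exists>l. ((\<lambda>z. z ^ fnodes g * Psi F z g) \<longlongrightarrow> l) (at_right 0))" for n
  proof (induction n rule: less_induct)
    case (less n)
    show ?case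
    proof (intro allI impI)
      fix g assume gn: "fnodes g = n"
      define Q where "Q z p = (if snd p = {#} then 0 else (z ^ fnodes (fst p) * Psi F z (fst p)) * (z ^ fnodes (snd p) * Phi F z (snd p)))" for z p
      have eq: "(\<lambda>z. z ^ fnodes g * Psi F z g) = (\<lambda>z. z ^ fnodes g * counit g - (\<Sum>p\<in>#cop g. Q z p))"
      proof (rule ext)
        fix z
        have "z ^ fnodes g * (\<Sum>p\<in>#cop g. if snd p = {#} then 0 else Psi F z (fst p) * Phi F z (snd p)) = (\<Sum>p\<in>#cop g. Q z p)"
          unfolding sum_mset_distrib_left
        proof (intro sum_mset_cong)
          fix p assume p: "p \<in># cop g"
          show "z ^ fnodes g * (if snd p = {#} then 0 else Psi F z (fst p) * Phi F z (snd p)) = Q z p"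
            unfolding Q_def using cop_nodes[OF p] by (auto simp: power_add[symmetric] mult_ac)
        qed
        then show "z ^ fnodes g * Psi F z g = z ^ fnodes g * counit g - (\<Sum>p\<in>#cop g. Q z p)"
          by (subst Psi_rec) (simp add: right_diff_distrib)
      qed
      have "\<exists>l. ((\<lambda>z. \<Sum>p\<in>#cop g. Q z p) \<longlongrightarrow> l) (at_right 0)"
      proof (rule tendsto_sum_mset_ex)
        fix p assume p: "p \<in># cop g"
        show "\<exists>l. ((\<lambda>z. Q z p) \<longlongrightarrow> l) (at_right 0)"
        proof (cases "snd p = {#}")
          case True then show ?thesis unfolding Q_def using tendsto_const by auto
        next
          case False
          then have "fnodes (fst p) < n" using cop_snd_ne[OF p] gn by simp
          then obtain l1 where l1: "((\<lambda>z. z ^ fnodes (fst p) * Psi F z (fst p)) \<longlongrightarrow> l1) (at_right 0)"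
            using less by blast
          obtain l2 where l2: "((\<lambda>z. z ^ fnodes (snd p) * Phi F z (snd p)) \<longlongrightarrow> l2) (at_right 0)"
            using Phi_pole by blast
          show ?thesis unfolding Q_def using False tendsto_mult[OF l1 l2] by auto
        qed
      qed
      then obtain l where l: "((\<lambda>z. \<Sum>p\<in>#cop g. Q z p) \<longlongrightarrow> l) (at_right 0)" by blast
      have c: "((\<lambda>z. z ^ fnodes g * counit g) \<longlongrightarrow> 0 ^ fnodes g * counit g) (at_right 0)"
        by (intro tendsto_intros)
      show "\<exists>l. ((\<lambda>z. z ^ fnodes g * Psi F z g) \<longlongrightarrow> l) (at_right 0)"
        unfolding eq using tendsto_diff[OF c l] by blast
    qed
  qed
  then show ?thesis by blast
qed

definition tau :: "forest \<Rightarrow> real" where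
  "tau g = Lim (at_right 0) (\<lambda>z. z * Dm F 1 z g)"

lemma lim_tau: "\<exists>l. ((\<lambda>z. z * Dm F 1 z g) \<longlongrightarrow> l) (at_right 0) \<Longrightarrow> ((\<lambda>z. z * Dm F 1 z g) \<longlongrightarrow> tau g) (at_right 0)"
  unfolding tau_def using tendsto_Lim[OF trivial_limit_at_right_real] by metis

lemma tau_empty: "tau {#} = 0"
proof -
  have "(\<lambda>z. z * Dm F 1 z {#}) = (\<lambda>z. 0)" by (simp add: Dm1_empty)
  then show ?thesis unfolding tau_def using tendsto_Lim[OF trivial_limit_at_right_real tendsto_const] by simp
qed

lemma convpow_lim:
  assumes H: "\<And>b. fnodes b \<le> n \<Longrightarrow> ((\<lambda>z. z * Dm F 1 z b) \<longlongrightarrow> tau b) (at_right 0)"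
  shows "fnodes g \<le> n \<Longrightarrow> ((\<lambda>z. z ^ m * Dm F m z g) \<longlongrightarrow> convpow tau m g) (at_right 0)"
proof (induction m arbitrary: g)
  case 0
  have "(\<lambda>z. z ^ 0 * Dm F 0 z g) = (\<lambda>z. counit g)" by (simp only: Dm_0 power_0 mult_1)
  then show ?case unfolding convpow.simps(1) by (simp only:) (rule tendsto_const)
next
  case (Suc m)
  have eq: "(\<lambda>z. z ^ Suc m * Dm F (Suc m) z g) = (\<lambda>z. (\<Sum>p\<in>#cop g. (z * Dm F 1 z (fst p)) * (z ^ m * Dm F m z (snd p))) + z * (real (fnodes g) * (z ^ m * Dm F m z g)))"
  proof (rule ext)
    fix z :: real
    have "z ^ Suc m * Dm F (Suc m) z g = z ^ Suc m * (\<Sum>p\<in>#cop g. Dm F 1 z (fst p) * Dm F m z (snd p)) + z ^ Suc m * (real (fnodes g) * Dm F m z g)"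
      by (simp only: Dm_Suc conv_alt distrib_left)
    also have "z ^ Suc m * (\<Sum>p\<in>#cop g. Dm F 1 z (fst p) * Dm F m z (snd p)) = (\<Sum>p\<in>#cop g. (z * Dm F 1 z (fst p)) * (z ^ m * Dm F m z (snd p)))"
      unfolding sum_mset_distrib_left by (rule sum_mset_cong) (simp only: power_Suc mult_ac)
    also have "z ^ Suc m * (real (fnodes g) * Dm F m z g) = z * (real (fnodes g) * (z ^ m * Dm F m z g))"
      by (simp only: power_Suc mult_ac)
    finally show "z ^ Suc m * Dm F (Suc m) z g = (\<Sum>p\<in>#cop g. (z * Dm F 1 z (fst p)) * (z ^ m * Dm F m z (snd p))) + z * (real (fnodes g) * (z ^ m * Dm F m z g))" .
  qed
  have t1: "((\<lambda>z. \<Sum>p\<in>#cop g. (z * Dm F 1 z (fst p)) * (z ^ m * Dm F m z (snd p))) \<longlongrightarrow> (\<Sum>p\<in>#cop g. tau (fst p) * convpow tau m (snd p))) (at_right 0)"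
  proof (rule tendsto_sum_mset)
    fix p assume p: "p \<in># cop g"
    have "fnodes (fst p) \<le> n" "fnodes (snd p) \<le> n" using cop_fst_le[OF p] cop_snd_le[OF p] Suc.prems by auto
    then show "((\<lambda>z. (z * Dm F 1 z (fst p)) * (z ^ m * Dm F m z (snd p))) \<longlongrightarrow> tau (fst p) * convpow tau m (snd p)) (at_right 0)"
      by (intro tendsto_mult H Suc.IH)
  qed
  have t2: "((\<lambda>z. z * (real (fnodes g) * (z ^ m * Dm F m z g))) \<longlongrightarrow> 0 * (real (fnodes g) * convpow tau m g)) (at_right 0)"
    by (intro tendsto_mult tendsto_const Suc.IH Suc.prems tendsto_ident_at)
  show ?case unfolding eq using tendsto_add[OF t1 t2] by (simp add: conv_alt)
qed

end




context gm
begin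

lemma tree_lim:
  assumes H: "\<And>b. fnodes b \<le> fnodes w \<Longrightarrow> ((\<lambda>z. z * Dm F 1 z b) \<longlongrightarrow> tau b) (at_right 0)"
  shows "((\<lambda>z. z * Dm F 1 z (Bplus_forest w)) \<longlongrightarrow> (\<Sum>k\<le>fnodes w. a k * convpow tau k w)) (at_right 0)"
proof -
  define N where "N = fnodes w"
  obtain R \<rho> where R: "\<rho> > 0" "isCont R 0" "\<forall>x. 0 < x \<longrightarrow> x < \<rho> \<longrightarrow> x * F x = (\<Sum>n\<le>N. a n * x^n) + x^(Suc N) * R x"
    using G_expand[of N] by blast
  define S where "S p = real (Suc (fnodes (snd p)))" for p :: "forest \<times> forest"
  define X where "X z p = Psi F z (fst p) * Phi F z (snd p)" for z p
  define Y where "Y z p = (z ^ fnodes (fst p) * Psi F z (fst p)) * (z ^ fnodes (snd p) * Phi F z (snd p))" for z p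
  define T where "T z = (\<Sum>k\<le>N. a k * (\<Sum>j\<le>k. real (k choose j) * z^(k-j) * (z^j * Dm F j z w)))
      + (\<Sum>p\<in>#cop w. Y z p * (z * (S p ^ Suc N * R (z * S p))))" for z
  have key: "X z p * ((z * S p) * F (z * S p)) =
        (\<Sum>k\<le>N. a k * (\<Sum>j\<le>k. real (k choose j) * z^(k-j) * (z^j * (Psi F z (fst p) * (real (fnodes (snd p)) ^ j * Phi F z (snd p))))))
        + Y z p * (z * (S p ^ Suc N * R (z * S p)))"
    if p: "p \<in># cop w" and z: "0 < z" "z < \<rho> / real (Suc N)" for z p
  proof -
    have le: "fnodes (snd p) \<le> N" using cop_snd_le[OF p] N_def by simp
    have Sp: "S p \<ge> 1" "S p \<le> real (Suc N)" using le by (auto simp: S_def)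
    have pos: "0 < z * S p" using z Sp by simp
    have "z * S p \<le> z * real (Suc N)" using Sp z by (intro mult_left_mono) auto
    also have "\<dots> < \<rho>" using z by (simp add: field_simps)
    finally have lt: "z * S p < \<rho>" .
    have E: "(z * S p) * F (z * S p) = (\<Sum>n\<le>N. a n * (z * S p)^n) + (z * S p)^(Suc N) * R (z * S p)"
      using R(3) pos lt by blast
    have B: "(z * S p)^n = (\<Sum>j\<le>n. real (n choose j) * z^(n-j) * (z^j * real (fnodes (snd p)) ^ j))" for n
      unfolding S_def by (rule binom_expand)
    have zz: "X z p * (z * S p)^(Suc N) = Y z p * (z * S p ^ Suc N)"
    proof -
      have e: "z ^ N = z ^ fnodes (fst p) * z ^ fnodes (snd p)"
        using cop_nodes[OF p] N_def by (simp add: power_add[symmetric])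
      show ?thesis unfolding X_def Y_def power_mult_distrib power_Suc e by (simp only: mult_ac)
    qed
    have "X z p * ((z * S p) * F (z * S p)) = X z p * (\<Sum>n\<le>N. a n * (z * S p)^n) + X z p * (z * S p)^(Suc N) * R (z * S p)"
      unfolding E by (simp add: distrib_left mult_ac)
    also have "X z p * (\<Sum>n\<le>N. a n * (z * S p)^n) = (\<Sum>k\<le>N. a k * (\<Sum>j\<le>k. real (k choose j) * z^(k-j) * (z^j * (Psi F z (fst p) * (real (fnodes (snd p)) ^ j * Phi F z (snd p))))))"
      unfolding B X_def sum_distrib_left by (intro sum.cong refl) (simp add: mult_ac)
    also have "X z p * (z * S p)^(Suc N) * R (z * S p) = Y z p * (z * (S p ^ Suc N * R (z * S p)))"
      using zz by (metis mult.assoc)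
    finally show ?thesis .
  qed
  have ev: "eventually (\<lambda>z. T z = z * Dm F 1 z (Bplus_forest w)) (at_right 0)"
    unfolding eventually_at_right_field
  proof (intro exI conjI allI impI)
    show "\<rho> / real (Suc N) > 0" using R(1) by simp
    fix z :: real assume z: "0 < z" "z < \<rho> / real (Suc N)"
    have "z * Dm F 1 z (Bplus_forest w) = (\<Sum>p\<in>#cop w. X z p * ((z * S p) * F (z * S p)))"
      unfolding Dm1_Bplus X_def S_def ..
    also have "\<dots> = (\<Sum>p\<in>#cop w. (\<Sum>k\<le>N. a k * (\<Sum>j\<le>k. real (k choose j) * z^(k-j) * (z^j * (Psi F z (fst p) * (real (fnodes (snd p)) ^ j * Phi F z (snd p)))))) + Y z p * (z * (S p ^ Suc N * R (z * S p))))"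
      by (rule sum_mset_cong) (rule key[OF _ z])
    also have "\<dots> = T z"
      unfolding T_def Dm_alt sum_mset.distrib
      by (simp add: sum_mset_sum_swap sum_distrib_left sum_mset_distrib_left)
    finally show "T z = z * Dm F 1 z (Bplus_forest w)" ..
  qed
  have cj: "((\<lambda>z. z^j * Dm F j z w) \<longlongrightarrow> convpow tau j w) (at_right 0)" for j
    using convpow_lim[OF H, where g=w and m=j] by blast
  have pw: "((\<lambda>z::real. z^i) \<longlongrightarrow> 0^i) (at_right 0)" for i :: nat
    by (rule tendsto_power) (rule tendsto_ident_at)
  have lim1: "((\<lambda>z. \<Sum>k\<le>N. a k * (\<Sum>j\<le>k. real (k choose j) * z^(k-j) * (z^j * Dm F j z w))) \<longlongrightarrow>
      (\<Sum>k\<le>N. a k * (\<Sum>j\<le>k. real (k choose j) * 0^(k-j) * convpow tau j w))) (at_right 0)"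
    by (intro tendsto_sum cj tendsto_mult tendsto_const pw)
  have lim2: "((\<lambda>z. \<Sum>p\<in>#cop w. Y z p * (z * (S p ^ Suc N * R (z * S p)))) \<longlongrightarrow> (\<Sum>p\<in>#cop w. 0)) (at_right 0)"
  proof (rule tendsto_sum_mset)
    fix p assume p: "p \<in># cop w"
    obtain l1 where l1: "((\<lambda>z. z ^ fnodes (fst p) * Psi F z (fst p)) \<longlongrightarrow> l1) (at_right 0)" using Psi_pole by blast
    obtain l2 where l2: "((\<lambda>z. z ^ fnodes (snd p) * Phi F z (snd p)) \<longlongrightarrow> l2) (at_right 0)" using Phi_pole by blast
    have t0: "((\<lambda>z. z * S p) \<longlongrightarrow> 0) (at_right 0)"
      using tendsto_mult[OF tendsto_ident_at[of "0::real" "{0<..}"] tendsto_const[of "S p"]] by simp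
    have RT: "((\<lambda>z. R (z * S p)) \<longlongrightarrow> R 0) (at_right 0)"
      by (rule isCont_tendsto_compose[OF R(2) t0])
    have "((\<lambda>z. Y z p * (z * (S p ^ Suc N * R (z * S p)))) \<longlongrightarrow> (l1 * l2) * (0 * (S p ^ Suc N * R 0))) (at_right 0)"
      unfolding Y_def by (intro tendsto_mult l1 l2 tendsto_const RT tendsto_ident_at)
    then show "((\<lambda>z. Y z p * (z * (S p ^ Suc N * R (z * S p)))) \<longlongrightarrow> 0) (at_right 0)" by simp
  qed
  have "(T \<longlongrightarrow> (\<Sum>k\<le>N. a k * (\<Sum>j\<le>k. real (k choose j) * 0^(k-j) * convpow tau j w)) + (\<Sum>p\<in>#cop w. 0)) (at_right 0)"
    unfolding T_def by (rule tendsto_add[OF lim1 lim2])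
  then have "(T \<longlongrightarrow> (\<Sum>k\<le>N. a k * convpow tau k w)) (at_right 0)"
    by (simp add: binom_zero_sum)
  then show ?thesis using Lim_transform_eventually[OF _ ev] N_def by simp
qed

lemma Dm1_conv: "((\<lambda>z. z * Dm F 1 z g) \<longlongrightarrow> tau g) (at_right 0)"
proof -
  have "\<forall>g. fnodes g \<le> n \<longrightarrow> ((\<lambda>z. z * Dm F 1 z g) \<longlongrightarrow> tau g) (at_right 0)" for n
  proof (induction n)
    case 0
    show ?case
    proof (intro allI impI)
      fix g :: forest assume "fnodes g \<le> 0"
      then have g0: "g = {#}" using fnodes_eq_0 by simp
      have "(\<lambda>z. z * Dm F 1 z g) = (\<lambda>z. 0)" using g0 by (simp add: Dm1_empty)
      then show "((\<lambda>z. z * Dm F 1 z g) \<longlongrightarrow> tau g) (at_right 0)"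
        using lim_tau[of g] tendsto_const by auto
    qed
  next
    case (Suc n)
    show ?case
    proof (intro allI impI)
      fix g :: forest assume g: "fnodes g \<le> Suc n"
      show "((\<lambda>z. z * Dm F 1 z g) \<longlongrightarrow> tau g) (at_right 0)"
      proof (cases "fnodes g \<le> n")
        case True then show ?thesis using Suc.IH by blast
      next
        case False
        then have gn: "fnodes g = Suc n" using g by simp
        then have "g \<noteq> {#}" by auto
        then obtain t g' where gt: "g = add_mset t g'" by (metis multiset_cases)
        show ?thesis
        proof (rule lim_tau, cases "g' = {#}")
          case True
          obtain w where t: "t = Node w" by (cases t)
          have gB: "g = Bplus_forest w" using gt True t by (simp add: Bplus_forest_def)
          have "fnodes w = n" using gn gB by simp
          then have "((\<lambda>z. z * Dm F 1 z (Bplus_forest w)) \<longlongrightarrow> (\<Sum>k\<le>fnodes w. a k * convpow tau k w)) (at_right 0)"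
            using Suc.IH by (intro tree_lim) auto
          then show "\<exists>l. ((\<lambda>z. z * Dm F 1 z g) \<longlongrightarrow> l) (at_right 0)" using gB by blast
        next
          case False
          have "Dm F 1 z g = 0" for z
          proof -
            have "Dm F 1 z g = Dm F 1 z ({#t#} + g')" using gt by simp
            also have "\<dots> = Dm F 1 z {#t#} * counit g' + counit {#t#} * Dm F 1 z g'" by (rule Dm1_add)
            finally show ?thesis using False by (simp add: counit_def)
          qed
          then show "\<exists>l. ((\<lambda>z. z * Dm F 1 z g) \<longlongrightarrow> l) (at_right 0)" using tendsto_const by auto
        qed
      qed
    qed
  qed
  then show ?thesis by blast
qed

lemma tau_tree: "tau (Bplus_forest w) = (\<Sum>k\<le>fnodes w. a k * convpow tau k w)"
  using tendsto_unique[OF trivial_limit_at_right_real Dm1_conv tree_lim[OF Dm1_conv]] .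

lemma convpow_zero: "fnodes g < k \<Longrightarrow> convpow tau k g = 0"
proof (induction k arbitrary: g)
  case 0 then show ?case by simp
next
  case (Suc k)
  have "conv tau (convpow tau k) g = 0"
    unfolding conv_alt
  proof (rule sum_mset.neutral, intro ballI)
    fix x assume "x \<in># image_mset (\<lambda>p. tau (fst p) * convpow tau k (snd p)) (cop g)"
    then obtain p where p: "p \<in># cop g" "x = tau (fst p) * convpow tau k (snd p)" by auto
    show "x = 0"
    proof (cases "fst p = {#}")
      case True then show ?thesis using p tau_empty by simp
    next
      case False
      then have "fnodes (snd p) < k" using cop_fst_ne[OF p(1)] Suc.prems by simp
      then show ?thesis using p Suc.IH by simp
    qed
  qed
  then show ?case by simp
qed

end




lemma exp_expand: "\<exists>E. isCont E 0 \<and> (\<forall>x::real. \<bar>x\<bar> < 1 \<longrightarrow> exp x = (\<Sum>m\<le>K. inverse (fact m) * x^m) + x^(Suc K) * E x)"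
proof -
  have ex: "(\<lambda>n. inverse (fact n) * x^n) sums exp x" for x :: real
  proof -
    have "(\<lambda>n. x^n /\<^sub>R fact n) = (\<lambda>n. inverse (fact n) * x^n)"
      by (rule ext) (simp add: divide_inverse mult.commute)
    then show ?thesis using exp_converges[of x] by simp
  qed
  have sm: "summable (\<lambda>n. inverse (fact n) * (1::real)^n)" using ex[of 1] sums_summable by blast
  obtain E where E: "isCont E 0" "\<forall>x. \<bar>x\<bar> < \<bar>1::real\<bar> \<longrightarrow> (\<lambda>n. inverse (fact n) * x^n) sums ((\<Sum>n\<le>K. inverse (fact n) * x^n) + x^(Suc K) * E x)"
    using ps_taylor[OF sm, of K] by auto
  have "\<forall>x::real. \<bar>x\<bar> < 1 \<longrightarrow> exp x = (\<Sum>m\<le>K. inverse (fact m) * x^m) + x^(Suc K) * E x"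
  proof (intro allI impI)
    fix x :: real assume "\<bar>x\<bar> < 1"
    then have "(\<lambda>n. inverse (fact n) * x^n) sums ((\<Sum>n\<le>K. inverse (fact n) * x^n) + x^(Suc K) * E x)" using E(2) by simp
    then show "exp x = (\<Sum>m\<le>K. inverse (fact m) * x^m) + x^(Suc K) * E x" using ex[of x] sums_unique2 by blast
  qed
  with E(1) show ?thesis by blast
qed

context gm
begin

definition pg :: "forest \<Rightarrow> real poly" where
  "pg g = (\<Sum>m\<le>Suc (fnodes g). monom ((-1)^m / fact m * convpow tau m g) m)"

lemma poly_pg: "poly (pg g) L = (\<Sum>m\<le>Suc (fnodes g). inverse (fact m) * (-L)^m * convpow tau m g)"
  unfolding pg_def poly_sum poly_monom
proof (intro sum.cong refl)
  fix m
  have "(-L)^m = (-1)^m * L^m" by (rule power_minus)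
  then show "(-1)^m / fact m * convpow tau m g * L^m = inverse (fact m) * (-L)^m * convpow tau m g"
    by (simp add: divide_inverse mult_ac)
qed

lemma phiR_lim:
  assumes mu: "\<mu> > 0" and s: "s > 0"
  shows "((\<lambda>z. phiR F \<mu> s z g) \<longlongrightarrow> poly (pg g) (ln s - ln \<mu>)) (at_right 0)"
proof -
  define L where "L = ln s - ln \<mu>"
  define N where "N = fnodes g"
  define K where "K = Suc N"
  obtain E where E: "isCont E 0" "\<forall>x::real. \<bar>x\<bar> < 1 \<longrightarrow> exp x = (\<Sum>m\<le>K. inverse (fact m) * x^m) + x^(Suc K) * E x"
    using exp_expand[of K] by blast
  define Y where "Y z p = (z ^ fnodes (fst p) * Psi F z (fst p)) * (z ^ fnodes (snd p) * Phi F z (snd p))" for z p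
  define Q where "Q p = (- L) * real (fnodes (snd p))" for p :: "forest \<times> forest"
  define T where "T z = exp (- z * real N * ln \<mu>) * ((\<Sum>m\<le>K. inverse (fact m) * (-L)^m * (z^m * Dm F m z g))
       + (\<Sum>p\<in>#cop g. Y z p * (z * (z * (Q p ^ Suc K * E (z * Q p))))))" for z
  define \<delta> where "\<delta> = 1 / (real (Suc N) * (\<bar>L\<bar> + 1))"
  have dpos: "\<delta> > 0" unfolding \<delta>_def by (simp add: add_pos_nonneg)
  have key: "Psi F z (fst p) * Phi F z (snd p) * exp (- z * real (fnodes (snd p)) * L) =
      (\<Sum>m\<le>K. inverse (fact m) * (-L)^m * (z^m * (Psi F z (fst p) * (real (fnodes (snd p)) ^ m * Phi F z (snd p)))))
      + Y z p * (z * (z * (Q p ^ Suc K * E (z * Q p))))"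
    if p: "p \<in># cop g" and z: "0 < z" "z < \<delta>" for z p
  proof -
    have le: "fnodes (snd p) \<le> N" using cop_snd_le[OF p] N_def by simp
    have y: "- z * real (fnodes (snd p)) * L = z * Q p" unfolding Q_def by simp
    have small: "\<bar>z * Q p\<bar> < 1"
    proof -
      have "\<bar>z * Q p\<bar> = z * (real (fnodes (snd p)) * \<bar>L\<bar>)" using z unfolding Q_def by (simp add: abs_mult)
      also have "\<dots> \<le> z * (real (Suc N) * (\<bar>L\<bar> + 1))" using z le by (intro mult_left_mono mult_mono) auto
      also have "\<dots> < \<delta> * (real (Suc N) * (\<bar>L\<bar> + 1))"
        using z by (intro mult_strict_right_mono) (auto simp: add_pos_nonneg)
      also have "\<dots> = 1" unfolding \<delta>_def by (simp add: add_pos_nonneg)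
      finally show ?thesis .
    qed
    have e: "z ^ Suc K = z ^ fnodes (fst p) * z ^ fnodes (snd p) * (z * z)"
      using cop_nodes[OF p] unfolding K_def N_def by (simp add: power_add[symmetric])
    have "Psi F z (fst p) * Phi F z (snd p) * exp (- z * real (fnodes (snd p)) * L)
        = Psi F z (fst p) * Phi F z (snd p) * (\<Sum>m\<le>K. inverse (fact m) * (z * Q p)^m)
          + Psi F z (fst p) * Phi F z (snd p) * ((z * Q p)^(Suc K) * E (z * Q p))"
      unfolding y using E(2) small by (simp add: distrib_left)
    also have "Psi F z (fst p) * Phi F z (snd p) * (\<Sum>m\<le>K. inverse (fact m) * (z * Q p)^m)
       = (\<Sum>m\<le>K. inverse (fact m) * (-L)^m * (z^m * (Psi F z (fst p) * (real (fnodes (snd p)) ^ m * Phi F z (snd p)))))"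
      unfolding sum_distrib_left Q_def power_mult_distrib by (intro sum.cong refl) (simp only: mult_ac)
    also have "Psi F z (fst p) * Phi F z (snd p) * ((z * Q p)^(Suc K) * E (z * Q p)) = Y z p * (z * (z * (Q p ^ Suc K * E (z * Q p))))"
      unfolding Y_def power_mult_distrib[of z "Q p"] e by (simp only: mult_ac)
    finally show ?thesis .
  qed
  have ev: "eventually (\<lambda>z. T z = phiR F \<mu> s z g) (at_right 0)"
    unfolding eventually_at_right_field
  proof (intro exI conjI allI impI)
    show "\<delta> > 0" by (rule dpos)
    fix z :: real assume z: "0 < z" "z < \<delta>"
    have "phiR F \<mu> s z g = exp (- z * real N * ln \<mu>) *
        (\<Sum>p\<in>#cop g. Psi F z (fst p) * Phi F z (snd p) * exp (- z * real (fnodes (snd p)) * L))"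
      unfolding phiR_formula[OF mu s] L_def N_def ..
    also have "(\<Sum>p\<in>#cop g. Psi F z (fst p) * Phi F z (snd p) * exp (- z * real (fnodes (snd p)) * L))
      = (\<Sum>p\<in>#cop g. (\<Sum>m\<le>K. inverse (fact m) * (-L)^m * (z^m * (Psi F z (fst p) * (real (fnodes (snd p)) ^ m * Phi F z (snd p)))))
      + Y z p * (z * (z * (Q p ^ Suc K * E (z * Q p)))))"
      by (rule sum_mset_cong) (rule key[OF _ z])
    also have "\<dots> = (\<Sum>m\<le>K. inverse (fact m) * (-L)^m * (z^m * Dm F m z g))
       + (\<Sum>p\<in>#cop g. Y z p * (z * (z * (Q p ^ Suc K * E (z * Q p)))))"
      unfolding Dm_alt sum_mset.distrib
      by (simp add: sum_mset_sum_swap sum_distrib_left sum_mset_distrib_left)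
    finally show "T z = phiR F \<mu> s z g" unfolding T_def ..
  qed
  have H: "\<And>b. fnodes b \<le> N \<Longrightarrow> ((\<lambda>z. z * Dm F 1 z b) \<longlongrightarrow> tau b) (at_right 0)"
    using Dm1_conv by blast
  have cj: "((\<lambda>z. z^m * Dm F m z g) \<longlongrightarrow> convpow tau m g) (at_right 0)" for m
    using convpow_lim[OF H, where g=g and m=m] N_def by blast
  have lim1: "((\<lambda>z. \<Sum>m\<le>K. inverse (fact m) * (-L)^m * (z^m * Dm F m z g)) \<longlongrightarrow>
      (\<Sum>m\<le>K. inverse (fact m) * (-L)^m * convpow tau m g)) (at_right 0)"
    by (intro tendsto_sum cj tendsto_mult tendsto_const)
  have lim2: "((\<lambda>z. \<Sum>p\<in>#cop g. Y z p * (z * (z * (Q p ^ Suc K * E (z * Q p))))) \<longlongrightarrow> (\<Sum>p\<in>#cop g. 0)) (at_right 0)"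
  proof (rule tendsto_sum_mset)
    fix p assume p: "p \<in># cop g"
    obtain l1 where l1: "((\<lambda>z. z ^ fnodes (fst p) * Psi F z (fst p)) \<longlongrightarrow> l1) (at_right 0)" using Psi_pole by blast
    obtain l2 where l2: "((\<lambda>z. z ^ fnodes (snd p) * Phi F z (snd p)) \<longlongrightarrow> l2) (at_right 0)" using Phi_pole by blast
    have t0: "((\<lambda>z. z * Q p) \<longlongrightarrow> 0) (at_right 0)"
      using tendsto_mult[OF tendsto_ident_at[of "0::real" "{0<..}"] tendsto_const[of "Q p"]] by simp
    have ET: "((\<lambda>z. E (z * Q p)) \<longlongrightarrow> E 0) (at_right 0)"
      by (rule isCont_tendsto_compose[OF E(1) t0])
    have "((\<lambda>z. Y z p * (z * (z * (Q p ^ Suc K * E (z * Q p))))) \<longlongrightarrow> (l1 * l2) * (0 * (0 * (Q p ^ Suc K * E 0)))) (at_right 0)"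
      unfolding Y_def by (intro tendsto_mult l1 l2 tendsto_const ET tendsto_ident_at)
    then show "((\<lambda>z. Y z p * (z * (z * (Q p ^ Suc K * E (z * Q p))))) \<longlongrightarrow> 0) (at_right 0)" by simp
  qed
  have ex0: "((\<lambda>z::real. exp (- z * real N * ln \<mu>)) \<longlongrightarrow> exp (- 0 * real N * ln \<mu>)) (at_right 0)"
    by (intro tendsto_intros)
  have "(T \<longlongrightarrow> exp (- 0 * real N * ln \<mu>) * ((\<Sum>m\<le>K. inverse (fact m) * (-L)^m * convpow tau m g) + (\<Sum>p\<in>#cop g. 0))) (at_right 0)"
    unfolding T_def by (intro tendsto_mult[OF ex0] tendsto_add[OF lim1 lim2])
  then have "(T \<longlongrightarrow> poly (pg g) L) (at_right 0)"
    by (simp add: poly_pg K_def N_def)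
  then show ?thesis using Lim_transform_eventually[OF _ ev] L_def by simp
qed

lemma Ppoly_eq:
  assumes mu: "\<mu> > 0"
  shows "Ppoly F \<mu> g = pg g"
  unfolding Ppoly_def
proof (rule the_equality)
  show "\<forall>s>0. ((\<lambda>z. phiR F \<mu> s z g) \<longlongrightarrow> poly (pg g) (ln (s / \<mu>))) (at_right 0)"
    using phiR_lim[OF mu] mu by (simp add: ln_div)
next
  fix p assume P: "\<forall>s>0. ((\<lambda>z. phiR F \<mu> s z g) \<longlongrightarrow> poly p (ln (s / \<mu>))) (at_right 0)"
  have "poly p L = poly (pg g) L" for L
  proof -
    define s where "s = \<mu> * exp L"
    have s: "s > 0" using mu by (simp add: s_def)
    have l: "ln (s / \<mu>) = L" using mu by (simp add: s_def)
    have l2: "ln s - ln \<mu> = L" using l s mu by (simp add: ln_div)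
    show ?thesis
      using tendsto_unique[OF trivial_limit_at_right_real P[rule_format, OF s] phiR_lim[OF mu s]] l l2 by simp
  qed
  then have "poly p = poly (pg g)" by (rule ext)
  then show "p = pg g" by (simp add: poly_eq_poly_eq_iff)
qed

lemma sigma_eq:
  assumes mu: "\<mu> > 0"
  shows "sigma F \<mu> g = tau g"
proof -
  have c: "coeff (pg g) 1 = - convpow tau 1 g"
  proof -
    have "coeff (pg g) 1 = (\<Sum>m\<le>Suc (fnodes g). if m = 1 then (-1)^m / fact m * convpow tau m g else 0)"
      unfolding pg_def coeff_sum coeff_monom by (intro sum.cong refl)
    also have "\<dots> = (-1)^1 / fact 1 * convpow tau 1 g" by simp
    finally show ?thesis by simp
  qed
  have "sigma F \<mu> g = - coeff (pg g) 1"
    unfolding sigma_def Ppoly_eq[OF mu] poly_0_coeff_0 coeff_pderiv by simp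
  also have "\<dots> = convpow tau 1 g" using c by simp
  also have "\<dots> = tau g" by simp
  finally show ?thesis .
qed

end




lemma linext_Bplus: "linext \<alpha> (Bplus w) = (\<Sum>g\<in>Poly_Mapping.keys w. Poly_Mapping.lookup w g * \<alpha> (Bplus_forest g))"
proof -
  let ?K = "Poly_Mapping.keys w"
  have lk: "Poly_Mapping.lookup (Bplus w) h = (\<Sum>g\<in>?K. (Poly_Mapping.lookup w g when Bplus_forest g = h))" for h
    unfolding Bplus_def lookup_sum lookup_single ..
  have lkB: "Poly_Mapping.lookup (Bplus w) (Bplus_forest g) = Poly_Mapping.lookup w g" if "g \<in> ?K" for g
  proof -
    have "(\<Sum>g'\<in>?K. (Poly_Mapping.lookup w g' when Bplus_forest g' = Bplus_forest g)) = (\<Sum>g'\<in>?K. if g' = g then Poly_Mapping.lookup w g' else 0)"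
      by (intro sum.cong refl) (simp add: Bplus_inj when_def)
    also have "\<dots> = Poly_Mapping.lookup w g" using that by simp
    finally show ?thesis using lk by simp
  qed
  have sub: "Poly_Mapping.keys (Bplus w) \<subseteq> Bplus_forest ` ?K"
  proof
    fix h assume h: "h \<in> Poly_Mapping.keys (Bplus w)"
    show "h \<in> Bplus_forest ` ?K"
    proof (rule ccontr)
      assume "h \<notin> Bplus_forest ` ?K"
      then have "Poly_Mapping.lookup (Bplus w) h = 0" unfolding lk by (intro sum.neutral) (auto simp: when_def)
      then show False using h by (simp add: in_keys_iff)
    qed
  qed
  have "linext \<alpha> (Bplus w) = (\<Sum>h\<in>Bplus_forest ` ?K. Poly_Mapping.lookup (Bplus w) h * \<alpha> h)"
    unfolding linext_def by (rule sum.mono_neutral_left) (auto simp: sub in_keys_iff)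
  also have "\<dots> = (\<Sum>g\<in>?K. Poly_Mapping.lookup (Bplus w) (Bplus_forest g) * \<alpha> (Bplus_forest g))"
    by (rule sum.reindex_cong[where l = Bplus_forest]) (auto simp: inj_on_def Bplus_inj)
  also have "\<dots> = (\<Sum>g\<in>?K. Poly_Mapping.lookup w g * \<alpha> (Bplus_forest g))"
    by (intro sum.cong refl) (simp add: lkB)
  finally show ?thesis .
qed

theorem mainTheorem11:
  fixes f :: "real \<Rightarrow> real" and c0 \<epsilon> r \<mu> :: real and c :: "int \<Rightarrow> real" and w :: HR
  assumes f_cont: "continuous_on {0..} f"
    and eps_pos: "\<epsilon> > 0"
    and f_asymp: "(\<lambda>\<zeta>. f \<zeta> - c0 / \<zeta>) \<in> O[at_top](\<lambda>\<zeta>. \<zeta> powr (- 1 - \<epsilon>))"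
    and r_pos: "r > 0"
    and laurent: "\<forall>z. 0 < z \<and> z < r \<longrightarrow>
                    ((\<lambda>n. c (int n - 1) * z powi (int n - 1)) sums mellin f z)"
    and mu_pos: "\<mu> > 0"
  shows "(\<lambda>n. c (int n - 1) * linext (convpow (sigma (mellin f) \<mu>) n) w)
           sums linext (sigma (mellin f) \<mu>) (Bplus w)"
proof -
  define a where "a n = c (int n - 1)" for n
  interpret gm "mellin f" a r
  proof
    show "r > 0" by (rule r_pos)
    fix x :: real assume x: "0 < x" "x < r"
    have s: "(\<lambda>n. c (int n - 1) * x powi (int n - 1)) sums mellin f x" using laurent x by blast
    have "(\<lambda>n. x * (c (int n - 1) * x powi (int n - 1))) sums (x * mellin f x)" by (rule sums_mult[OF s])
    moreover have "x * (c (int n - 1) * x powi (int n - 1)) = a n * x^n" for n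
    proof -
      have "x powi (int n - 1) = x^n / x" using x by (simp add: power_int_diff)
      then show ?thesis using x by (simp add: a_def)
    qed
    ultimately show "(\<lambda>n. a n * x^n) sums (x * mellin f x)" by simp
  qed
  have sig: "sigma (mellin f) \<mu> = tau" by (rule ext) (rule sigma_eq[OF mu_pos])
  have each: "(\<lambda>n. c (int n - 1) * convpow tau n g) sums tau (Bplus_forest g)" for g
  proof -
    have "(\<lambda>n. c (int n - 1) * convpow tau n g) sums (\<Sum>n\<in>{..fnodes g}. c (int n - 1) * convpow tau n g)"
      by (rule sums_finite) (auto simp: convpow_zero)
    then show ?thesis using tau_tree[of g] by (simp add: a_def)
  qed
  have "(\<lambda>n. \<Sum>g\<in>Poly_Mapping.keys w. Poly_Mapping.lookup w g * (c (int n - 1) * convpow tau n g))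
      sums (\<Sum>g\<in>Poly_Mapping.keys w. Poly_Mapping.lookup w g * tau (Bplus_forest g))"
    by (intro sums_sum sums_mult each)
  then show ?thesis
    unfolding sig linext_Bplus unfolding linext_def by (simp add: sum_distrib_left mult_ac)
qed



end
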